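(* For every integer $d\ge 2$ there is a polynomial $p_d$ of degree exactly $d-2$ such that $v_n^d=p_d(n)$ for all integers $n\ge \lceil d/2\rceil+1$.
   Context: The $2\times n$ Miura-ori $M_{2,n}$ ($n\ge1$) has faces $\alpha_{i,j}$ ($i\in\{1,2\}$, $j\in\{1,\dots,n\}$), interior vertices $x_1,\dots,x_{n-1}$, and creases $e_0$ and $e_{3k-1},e_{3k},e_{3k+1}$ ($k=1,\dots,n-1$). At $x_k$ the creases are left $e_{3k-3}$, top $e_{3k-1}$, right $e_{3k}$, bottom $e_{3k+1}$. Face $\alpha_{1,j}$ is bordered by those of $e_{3j-4}$ (iff $j\ge2$), $e_{3j-3}$, $e_{3j-1}$ (iff $j\le n-1$); $\alpha_{2,j}$ by those of $e_{3j-2}$ (iff $j\ge2$), $e_{3j-3}$, $e_{3j+1}$ (iff $j\le n-1$). An MV assignment $\mu$ maps creases to $\{1,-1\}$; it is locally valid if for each $k$ exactly one of $\mu(e_{3k-1}),\mu(e_{3k}),\mu(e_{3k+1})$ differs from $\mu(e_{3k-3})$. The face flip $\mu_\alpha$ negates $\mu$ on the creases bordering $\alpha$; $\alpha$ is flippable under $\mu$ if $\mu,\mu_\alpha$ are both locally valid. $v_n^d$ denotes the number of locally valid MV assignments of $M_{2,n}$ with exactly $d$ flippable faces, i.e., the number of vertices of degree $d$ in the origami flip graph ${\rm OFG}(M_{2,n})$. *)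

theory Defs
  imports "HOL-Library.FuncSet" "HOL-Computational_Algebra.Polynomial"
begin

text \<open>The 2 x n Miura-ori M_{2,n}. Crease e_m is represented by its index m :: nat.
  Mountain/valley values are the integers 1 and -1.\<close>

definition creases :: "nat \<Rightarrow> nat set" where
  "creases n = {0} \<union> (\<Union>k\<in>{1..n-1}. {3*k-1, 3*k, 3*k+1})"

definition faces :: "nat \<Rightarrow> (nat \<times> nat) set" where
  "faces n = {1,2} \<times> {1..n}"

definition border :: "nat \<Rightarrow> nat \<times> nat \<Rightarrow> nat set" where
  "border n f = (case f of (i, j) \<Rightarrow>
     (if i = 1 then
        (if j \<ge> 2 then {3*j-4} else {}) \<union> {3*j-3} \<union> (if j \<le> n-1 then {3*j-1} else {})
      else
        (if j \<ge> 2 then {3*j-2} else {}) \<union> {3*j-3} \<union> (if j \<le> n-1 then {3*j+1} else {})))"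

definition mv_assignments :: "nat \<Rightarrow> (nat \<Rightarrow> int) set" where
  "mv_assignments n = creases n \<rightarrow>\<^sub>E {1, -1}"

definition locally_valid :: "nat \<Rightarrow> (nat \<Rightarrow> int) \<Rightarrow> bool" where
  "locally_valid n \<mu> \<longleftrightarrow> \<mu> \<in> mv_assignments n \<and>
     (\<forall>k\<in>{1..n-1}. card {c \<in> {3*k-1, 3*k, 3*k+1}. \<mu> c \<noteq> \<mu> (3*k-3)} = 1)"

definition face_flip :: "nat \<Rightarrow> (nat \<Rightarrow> int) \<Rightarrow> nat \<times> nat \<Rightarrow> (nat \<Rightarrow> int)" where
  "face_flip n \<mu> f = (\<lambda>c. if c \<in> border n f then - \<mu> c else \<mu> c)"

definition flippable :: "nat \<Rightarrow> (nat \<Rightarrow> int) \<Rightarrow> nat \<times> nat \<Rightarrow> bool" where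
  "flippable n \<mu> f \<longleftrightarrow> locally_valid n \<mu> \<and> locally_valid n (face_flip n \<mu> f)"

definition v :: "nat \<Rightarrow> nat \<Rightarrow> nat" where
  "v n d = card {\<mu>. locally_valid n \<mu> \<and> card {f \<in> faces n. flippable n \<mu> f} = d}"

end

theory Submission
  imports Defs
begin


lemma cpow: "coeff ([:1,1:]^(Suc k) :: real poly) k = real (Suc k)"
proof (induction k)
  case 0
  then show ?case by simp
next
  case (Suc k)
  have "([:1,1:]^(Suc (Suc k)) :: real poly) = [:1,1:]^(Suc k) + pCons 0 ([:1,1:]^(Suc k))"
    by (simp add: mult_pCons_left)
  then show ?case using Suc coeff_linear_power[of "1::real" "Suc k"] by simp
qed

lemma antidiff:
  fixes f :: "nat \<Rightarrow> real" and p :: "real poly"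
  assumes "\<forall>m\<ge>N. f (Suc m) - f m = poly p (real m)"
  shows "\<exists>q. degree q \<le> Suc (degree p) \<and> coeff q (Suc (degree p)) = lead_coeff p / real (Suc (degree p))
           \<and> (\<forall>m\<ge>N. f m = poly q (real m))"
  using assms
proof (induction "degree p" arbitrary: f p rule: less_induct)
  case less
  define k where "k = degree p"
  define c where "c = lead_coeff p / real (Suc k)"
  define h :: "real poly" where "h = monom c (Suc k)"
  define D :: "real poly" where "D = smult c ([:1,1:]^Suc k) - monom c (Suc k)"
  have polyD: "poly D x = poly h (x+1) - poly h x" for x
    by (simp add: D_def h_def poly_monom algebra_simps)
  have coeffD: "coeff D k = lead_coeff p"
    using cpow[of k] by (simp add: D_def c_def coeff_monom)
  have degD: "degree D \<le> k"
  proof (rule degree_le, intro allI impI)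
    fix i assume "k < i"
    show "coeff D i = 0"
    proof (cases "i = Suc k")
      case True
      then show ?thesis using coeff_linear_power[of "1::real" "Suc k"] by (simp add: D_def)
    next
      case False
      have d1: "degree ([:1,1:]^Suc k :: real poly) = Suc k" by (rule degree_linear_power)
      have "i > degree ([:1,1:]^Suc k :: real poly)" using \<open>k < i\<close> False d1 by linarith
      then have "coeff ([:1,1:]^Suc k :: real poly) i = 0" using coeff_eq_0 by blast
      then show ?thesis using False by (simp add: D_def coeff_monom)
    qed
  qed
  define g where "g m = f m - poly h (real m)" for m
  have g: "\<forall>m\<ge>N. g (Suc m) - g m = poly (p - D) (real m)"
    using less.prems polyD by (simp add: g_def algebra_simps)
  have degpD: "degree (p - D) \<le> k" using degD degree_diff_le k_def by auto
  have cpD: "coeff (p - D) k = 0" using coeffD k_def by simp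
  have degh: "degree h \<le> Suc k" by (simp add: h_def degree_monom_le)
  have ch: "coeff h (Suc k) = c" by (simp add: h_def)
  show ?case
  proof (cases "p - D = 0")
    case True
    have gc: "g m = g N" if "m \<ge> N" for m
      using that
    proof (induction m rule: dec_induct)
      case base then show ?case by simp
    next
      case (step m)
      have "g (Suc m) - g m = 0" using g True step(1) by simp
      then show ?case using step(3) by simp
    qed
    define q where "q = h + [:g N:]"
    have "degree q \<le> Suc k" unfolding q_def using degh
      by (metis (no_types, lifting) add_increasing2 bot_nat_0.extremum degree_add_le degree_pCons_0)
    moreover have "coeff q (Suc k) = c" by (simp add: q_def ch)
    moreover have "\<forall>m\<ge>N. f m = poly q (real m)"
    proof (intro allI impI)
      fix m assume "N \<le> m"
      then have "g m = g N" by (rule gc)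
      then show "f m = poly q (real m)" unfolding q_def g_def by simp
    qed
    ultimately show ?thesis using k_def c_def by blast
  next
    case False
    have "degree (p - D) < k"
    proof (rule ccontr)
      assume "\<not> degree (p - D) < k"
      then have "degree (p - D) = k" using degpD by simp
      then have "lead_coeff (p - D) = 0" using cpD by simp
      then show False using False leading_coeff_0_iff by blast
    qed
    then obtain q' where q': "degree q' \<le> Suc (degree (p - D))" "\<forall>m\<ge>N. g m = poly q' (real m)"
      using less.hyps[of "p - D" g] g k_def by blast
    define q where "q = h + q'"
    have dq': "degree q' \<le> k" using q' \<open>degree (p - D) < k\<close> by simp
    have "degree q \<le> Suc k" unfolding q_def using degh dq'
      by (meson degree_add_le le_SucI)
    moreover have "coeff q (Suc k) = c" using dq' coeff_eq_0[of q' "Suc k"] by (simp add: q_def ch)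
    moreover have "\<forall>m\<ge>N. f m = poly q (real m)" using q'(2) unfolding q_def g_def
      by (simp add: algebra_simps)
    ultimately show ?thesis using k_def c_def by blast
  qed
qed

fun Aw :: "nat \<Rightarrow> nat \<Rightarrow> nat" and Rw :: "nat \<Rightarrow> nat \<Rightarrow> nat" where
  "Aw 0 d = (if d = 1 then 1 else 0)"
| "Aw (Suc m) d = Aw m d + (if d = 0 then 0 else Rw m (d-1) + Aw m (d-1))"
| "Rw 0 d = (if d = 2 then 1 else 0)"
| "Rw (Suc m) d = (if d = 0 then 0 else 2 * Aw m (d-1)) + (if d < 2 then 0 else Rw m (d-2))"

lemma Aw0: "Aw m 0 = 0" by (induction m) auto
lemma Rw01: "Rw m 0 = 0 \<and> Rw m 1 = 0" by (induction m) (auto simp: Aw0)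
lemma Aw1: "Aw m 1 = 1" by (induction m) (auto simp: Aw0 Rw01)

definition polyA :: "nat \<Rightarrow> bool" where
  "polyA d \<longleftrightarrow> (\<exists>p. degree p = d-1 \<and> lead_coeff p > 0 \<and> (\<forall>m \<ge> (d-1) div 2. real (Aw m d) = poly p (real m)))"
definition polyR :: "nat \<Rightarrow> bool" where
  "polyR d \<longleftrightarrow> (\<exists>p. degree p = d-2 \<and> lead_coeff p > 0 \<and> (\<forall>m \<ge> d div 2. real (Rw m d) = poly p (real m)))"

lemma sum_lead:
  fixes p q :: "real poly"
  assumes "degree p = k" "lead_coeff p > 0" "q = 0 \<or> degree q < k"
  shows "degree (p + q) = k \<and> lead_coeff (p + q) > 0"
proof (cases "q = 0")
  case True
  then show ?thesis using assms by simp
next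
  case False
  then have dq: "degree q < degree p" using assms by simp
  have "degree (p + q) = degree p" using dq by (rule degree_add_eq_left)
  moreover have "lead_coeff (p + q) = lead_coeff p"
    using lead_coeff_add_le[OF dq] by (simp add: add.commute)
  ultimately show ?thesis using assms by simp
qed

lemma stepA:
  assumes d2: "2 \<le> d" and IA: "polyA (d-1)" and IR: "d \<noteq> 2 \<Longrightarrow> polyR (d-1)"
  shows "polyA d"
proof -
  obtain pA where pA: "degree pA = d-2" "lead_coeff pA > 0"
      "\<forall>m \<ge> (d-2) div 2. real (Aw m (d-1)) = poly pA (real m)"
  proof -
    obtain p where "degree p = d-1-1" "lead_coeff p > 0"
      "\<forall>m \<ge> (d-1-1) div 2. real (Aw m (d-1)) = poly p (real m)" using IA unfolding polyA_def by blast
    moreover have "d - 1 - 1 = d - 2" by simp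
    ultimately show ?thesis using that[of p] by simp
  qed
  obtain pR where pR: "pR = 0 \<or> degree pR < d-2"
      "\<forall>m \<ge> (d-1) div 2. real (Rw m (d-1)) = poly pR (real m)"
  proof (cases "d = 2")
    case True
    then show ?thesis using that[of 0] Rw01 by simp
  next
    case False
    then obtain p where "degree p = d-1-2" "\<forall>m \<ge> (d-1) div 2. real (Rw m (d-1)) = poly p (real m)"
      using IR unfolding polyR_def by blast
    moreover have "d-1-2 < d-2" using False d2 by simp
    ultimately show ?thesis using that[of p] by simp
  qed
  define P where "P = pA + pR"
  have P: "degree P = d-2" "lead_coeff P > 0" using sum_lead[OF pA(1,2) pR(1)] P_def by auto
  have diff: "\<forall>m\<ge>(d-1) div 2. real (Aw (Suc m) d) - real (Aw m d) = poly P (real m)"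
  proof (intro allI impI)
    fix m assume m: "(d-1) div 2 \<le> m"
    then have m2: "m \<ge> (d-2) div 2" by linarith
    have "real (Aw (Suc m) d) - real (Aw m d) = real (Rw m (d-1)) + real (Aw m (d-1))"
      using d2 by simp
    also have "\<dots> = poly P (real m)" using pA(3) pR(2) m m2 by (simp add: P_def)
    finally show "real (Aw (Suc m) d) - real (Aw m d) = poly P (real m)" .
  qed
  obtain q where q: "degree q \<le> Suc (degree P)"
      "coeff q (Suc (degree P)) = lead_coeff P / real (Suc (degree P))"
      "\<forall>m\<ge>(d-1) div 2. real (Aw m d) = poly q (real m)"
    using antidiff[OF diff] by blast
  have sd: "Suc (degree P) = d - 1" using P(1) d2 by simp
  have cq: "coeff q (d-1) > 0" using q(2) P(2) sd by simp
  then have "degree q \<ge> d - 1" by (metis le_degree less_irrefl)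
  then have dq: "degree q = d - 1" using q(1) sd by simp
  show ?thesis unfolding polyA_def using dq cq q(3) by (intro exI[of _ q]) simp
qed

lemma stepR:
  assumes d2: "2 \<le> d" and IA: "polyA (d-1)" and IR: "d \<ge> 4 \<Longrightarrow> polyR (d-2)"
  shows "polyR d"
proof -
  obtain pA where pA: "degree pA = d-2" "lead_coeff pA > 0"
      "\<forall>m \<ge> (d-2) div 2. real (Aw m (d-1)) = poly pA (real m)"
  proof -
    obtain p where "degree p = d-1-1" "lead_coeff p > 0"
      "\<forall>m \<ge> (d-1-1) div 2. real (Aw m (d-1)) = poly p (real m)" using IA unfolding polyA_def by blast
    moreover have "d - 1 - 1 = d - 2" by simp
    ultimately show ?thesis using that[of p] by simp
  qed
  obtain pR where pR: "pR = 0 \<or> degree pR < d-2"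
      "\<forall>m \<ge> (d-2) div 2. real (Rw m (d-2)) = poly pR (real m)"
  proof (cases "d \<ge> 4")
    case False
    then have "d - 2 = 0 \<or> d - 2 = 1" using d2 by linarith
    then show ?thesis using that[of 0] Rw01 by auto
  next
    case True
    then obtain p where "degree p = d-2-2" "\<forall>m \<ge> (d-2) div 2. real (Rw m (d-2)) = poly p (real m)"
      using IR unfolding polyR_def by blast
    moreover have "d-2-2 < d-2" using True d2 by simp
    ultimately show ?thesis using that[of p] by simp
  qed
  define P where "P = smult 2 pA + pR"
  have dsp: "degree (smult 2 pA) = d-2" "lead_coeff (smult 2 pA) > 0" using pA by auto
  have P: "degree P = d-2" "lead_coeff P > 0" using sum_lead[OF dsp pR(1)] unfolding P_def by auto
  define Q where "Q = pcompose P [:-1,1:]"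
  have lQ: "lead_coeff Q = lead_coeff P * lead_coeff [:-1,1::real:] ^ degree P"
    unfolding Q_def by (rule lead_coeff_comp) simp
  have dQ: "degree Q = d-2" using P(1) by (simp add: Q_def degree_pcompose)
  have lQ2: "lead_coeff Q > 0" using P(2) lQ by simp
  have "\<forall>m\<ge>d div 2. real (Rw m d) = poly Q (real m)"
  proof (intro allI impI)
    fix m assume m: "d div 2 \<le> m"
    have "m \<noteq> 0" using m d2 by presburger
    then obtain m' where m': "m = Suc m'" using not0_implies_Suc by blast
    then have m'': "m' \<ge> (d-2) div 2" using m d2 by linarith
    have "Rw m d = 2 * Aw m' (d-1) + Rw m' (d-2)"
      using m' d2 by simp
    then have "real (Rw m d) = 2 * real (Aw m' (d-1)) + real (Rw m' (d-2))" by simp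
    also have "\<dots> = poly P (real m')" using pA(3) pR(2) m'' by (simp add: P_def)
    also have "\<dots> = poly Q (real m)" using m' by (simp add: Q_def poly_pcompose)
    finally show "real (Rw m d) = poly Q (real m)" .
  qed
  then show "polyR d" unfolding polyR_def using dQ lQ2 by (intro exI[of _ Q]) simp
qed

lemma poly_main: "(1 \<le> d \<longrightarrow> polyA d) \<and> (2 \<le> d \<longrightarrow> polyR d)"
proof (induction d rule: less_induct)
  case (less d)
  show ?case
  proof (intro conjI impI)
    assume d1: "1 \<le> d"
    show "polyA d"
    proof (cases "d = 1")
      case True
      have "real (Aw m d) = poly [:1:] (real m)" for m using True Aw1 by simp
      then show ?thesis unfolding polyA_def using True by (intro exI[of _ "[:1:]"]) simp
    next
      case False
      then show ?thesis using stepA less.IH[of "d-1"] d1 by simp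
    qed
  next
    assume d2: "2 \<le> d"
    show "polyR d" using stepR[OF d2] less.IH[of "d-1"] less.IH[of "d-2"] d2 by simp
  qed
qed




definition one3 :: "bool \<Rightarrow> bool \<Rightarrow> bool \<Rightarrow> bool" where
  "one3 a b c \<longleftrightarrow> (a \<and> \<not> b \<and> \<not> c) \<or> (\<not> a \<and> b \<and> \<not> c) \<or> (\<not> a \<and> \<not> b \<and> c)"

lemma card3:
  assumes "a \<noteq> b" "a \<noteq> c" "b \<noteq> c"
  shows "card {x \<in> {a,b,c}. P x} = 1 \<longleftrightarrow> one3 (P a) (P b) (P c)"
proof -
  have e: "{x \<in> {a,b,c}. P x} = (if P a then {a} else {}) \<union> (if P b then {b} else {}) \<union> (if P c then {c} else {})"
    by auto
  show ?thesis unfolding e one3_def using assms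
    by (cases "P a"; cases "P b"; cases "P c") (auto simp: card_insert_if)
qed

lemma lv_iff: "locally_valid n \<mu> \<longleftrightarrow> \<mu> \<in> mv_assignments n \<and>
   (\<forall>k\<in>{1..n-1}. one3 (\<mu> (3*k-1) \<noteq> \<mu> (3*k-3)) (\<mu> (3*k) \<noteq> \<mu> (3*k-3)) (\<mu> (3*k+1) \<noteq> \<mu> (3*k-3)))"
proof -
  have "card {c \<in> {3*k-1, 3*k, 3*k+1}. \<mu> c \<noteq> \<mu> (3*k-3)} = 1 \<longleftrightarrow>
        one3 (\<mu> (3*k-1) \<noteq> \<mu> (3*k-3)) (\<mu> (3*k) \<noteq> \<mu> (3*k-3)) (\<mu> (3*k+1) \<noteq> \<mu> (3*k-3))"
    if "k \<in> {1..n-1}" for k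
    using that by (intro card3) auto
  then show ?thesis unfolding locally_valid_def by auto
qed

lemma cre_iff: "c \<in> creases n \<longleftrightarrow> c = 0 \<or> (2 \<le> c \<and> c + 2 \<le> 3*n)"
proof
  assume "c \<in> creases n"
  then show "c = 0 \<or> (2 \<le> c \<and> c + 2 \<le> 3*n)" unfolding creases_def by auto
next
  assume h: "c = 0 \<or> (2 \<le> c \<and> c + 2 \<le> 3*n)"
  show "c \<in> creases n"
  proof (cases "c = 0")
    case True then show ?thesis by (simp add: creases_def)
  next
    case False
    define k where "k = (c+1) div 3"
    have k: "k \<in> {1..n-1}" using h False unfolding k_def by auto
    have "c \<in> {3*k-1, 3*k, 3*k+1}" unfolding k_def by auto
    then show ?thesis using k unfolding creases_def by blast
  qed
qed

lemma vert_cre: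
  assumes "k \<in> {1..n-1}"
  shows "3*k-3 \<in> creases n" "3*k-1 \<in> creases n" "3*k \<in> creases n" "3*k+1 \<in> creases n"
  using assms unfolding cre_iff by auto

lemma mv_val: "\<mu> \<in> mv_assignments n \<Longrightarrow> c \<in> creases n \<Longrightarrow> \<mu> c = 1 \<or> \<mu> c = -1"
  unfolding mv_assignments_def by auto

lemma border_sub: "f \<in> faces n \<Longrightarrow> border n f \<subseteq> creases n"
  unfolding faces_def border_def by (auto simp: cre_iff split: if_splits)

lemma flip_mv:
  assumes "\<mu> \<in> mv_assignments n" "f \<in> faces n"
  shows "face_flip n \<mu> f \<in> mv_assignments n"
  using assms border_sub[OF assms(2)] unfolding mv_assignments_def face_flip_def PiE_iff extensional_def
  by auto

lemma flip_ne:
  assumes "\<mu> c = 1 \<or> \<mu> c = -1" "\<mu> c' = 1 \<or> \<mu> c' = -1"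
  shows "(face_flip n \<mu> f c \<noteq> face_flip n \<mu> f c') \<longleftrightarrow> ((\<mu> c \<noteq> \<mu> c') \<noteq> ((c \<in> border n f) \<noteq> (c' \<in> border n f)))"
  using assms unfolding face_flip_def by auto

lemma mb1_0:
  assumes "1 \<le> j" "j \<le> n" "1 \<le> k" "k \<le> n-1"
  shows "(3*k-3 \<in> border n (1,j)) = (k = j)"
  using assms unfolding border_def by (simp split: if_splits; presburger?)

lemma mb1_1:
  assumes "1 \<le> j" "j \<le> n" "1 \<le> k" "k \<le> n-1"
  shows "(3*k-1 \<in> border n (1,j)) = (k+1 = j \<or> k = j)"
  using assms unfolding border_def by (simp split: if_splits; presburger?)

lemma mb1_2:
  assumes "1 \<le> j" "j \<le> n" "1 \<le> k" "k \<le> n-1"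
  shows "(3*k \<in> border n (1,j)) = (k+1 = j)"
  using assms unfolding border_def by (simp split: if_splits; presburger?)

lemma mb1_3:
  assumes "1 \<le> j" "j \<le> n" "1 \<le> k" "k \<le> n-1"
  shows "(3*k+1 \<in> border n (1,j)) = (False)"
  using assms unfolding border_def by (simp split: if_splits; presburger?)

lemmas mem_border1 = mb1_0 mb1_1 mb1_2 mb1_3

lemma mb2_0:
  assumes "1 \<le> j" "j \<le> n" "1 \<le> k" "k \<le> n-1"
  shows "(3*k-3 \<in> border n (2,j)) = (k = j)"
  using assms unfolding border_def by (simp split: if_splits; presburger?)

lemma mb2_1:
  assumes "1 \<le> j" "j \<le> n" "1 \<le> k" "k \<le> n-1"
  shows "(3*k-1 \<in> border n (2,j)) = (False)"
  using assms unfolding border_def by (simp split: if_splits; presburger?)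

lemma mb2_2:
  assumes "1 \<le> j" "j \<le> n" "1 \<le> k" "k \<le> n-1"
  shows "(3*k \<in> border n (2,j)) = (k+1 = j)"
  using assms unfolding border_def by (simp split: if_splits; presburger?)

lemma mb2_3:
  assumes "1 \<le> j" "j \<le> n" "1 \<le> k" "k \<le> n-1"
  shows "(3*k+1 \<in> border n (2,j)) = (k+1 = j \<or> k = j)"
  using assms unfolding border_def by (simp split: if_splits; presburger?)

lemmas mem_border2 = mb2_0 mb2_1 mb2_2 mb2_3

definition vtyp :: "(nat \<Rightarrow> int) \<Rightarrow> nat \<Rightarrow> nat" where
  "vtyp \<mu> k = (if \<mu> (3*k-1) \<noteq> \<mu> (3*k-3) then 0 else if \<mu> (3*k) \<noteq> \<mu> (3*k-3) then 1 else 2)"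

definition Xv :: "nat \<Rightarrow> (nat \<Rightarrow> int) \<Rightarrow> nat \<Rightarrow> nat" where
  "Xv n \<mu> k = (if k = 0 \<or> n \<le> k then 3 else vtyp \<mu> k)"

lemma one3_facts:
  assumes "one3 a b c"
  shows "one3 a (\<not> b) (\<not> c) \<longleftrightarrow> \<not> a" "one3 (\<not> a) (\<not> b) c \<longleftrightarrow> \<not> c"
    "one3 (\<not> a) b (\<not> c) \<longleftrightarrow> \<not> b" "(\<not> a \<and> \<not> b) \<longleftrightarrow> c"
  using assms unfolding one3_def by auto

lemma flip_gen:
  assumes lv: "locally_valid n \<mu>" and fj: "f \<in> faces n"
    and mem: "\<And>k. k \<in> {1..n-1} \<Longrightarrow>
       (3*k-3 \<in> border n f) = L k \<and> (3*k-1 \<in> border n f) = T k \<and>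
       (3*k \<in> border n f) = R k \<and> (3*k+1 \<in> border n f) = B k"
  shows "flippable n \<mu> f \<longleftrightarrow> (\<forall>k\<in>{1..n-1}.
      one3 ((\<mu> (3*k-1) \<noteq> \<mu> (3*k-3)) \<noteq> (T k \<noteq> L k))
           ((\<mu> (3*k) \<noteq> \<mu> (3*k-3)) \<noteq> (R k \<noteq> L k))
           ((\<mu> (3*k+1) \<noteq> \<mu> (3*k-3)) \<noteq> (B k \<noteq> L k)))"
proof -
  have mv: "\<mu> \<in> mv_assignments n" using lv lv_iff by blast
  have nmv: "face_flip n \<mu> f \<in> mv_assignments n" using flip_mv[OF mv fj] .
  have eq: "one3 (face_flip n \<mu> f (3*k-1) \<noteq> face_flip n \<mu> f (3*k-3))
                 (face_flip n \<mu> f (3*k) \<noteq> face_flip n \<mu> f (3*k-3))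
                 (face_flip n \<mu> f (3*k+1) \<noteq> face_flip n \<mu> f (3*k-3)) \<longleftrightarrow>
            one3 ((\<mu> (3*k-1) \<noteq> \<mu> (3*k-3)) \<noteq> (T k \<noteq> L k))
           ((\<mu> (3*k) \<noteq> \<mu> (3*k-3)) \<noteq> (R k \<noteq> L k))
           ((\<mu> (3*k+1) \<noteq> \<mu> (3*k-3)) \<noteq> (B k \<noteq> L k))" if k: "k \<in> {1..n-1}" for k
  proof -
    have v: "\<mu> (3*k-3) = 1 \<or> \<mu> (3*k-3) = -1" "\<mu> (3*k-1) = 1 \<or> \<mu> (3*k-1) = -1"
      "\<mu> (3*k) = 1 \<or> \<mu> (3*k) = -1" "\<mu> (3*k+1) = 1 \<or> \<mu> (3*k+1) = -1"
      using mv_val[OF mv] vert_cre[OF k] by auto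
    show ?thesis using flip_ne[where \<mu>=\<mu> and c="3*k-1" and c'="3*k-3" and n=n and f=f, OF v(2) v(1)]
      flip_ne[where \<mu>=\<mu> and c="3*k" and c'="3*k-3" and n=n and f=f, OF v(3) v(1)]
      flip_ne[where \<mu>=\<mu> and c="3*k+1" and c'="3*k-3" and n=n and f=f, OF v(4) v(1)] mem[OF k]
      by simp
  qed
  show ?thesis unfolding flippable_def using lv nmv eq lv_iff[of n "face_flip n \<mu> f"] by auto
qed

lemma vtyp_facts:
  assumes "one3 (\<mu> (3*k-1) \<noteq> \<mu> (3*k-3)) (\<mu> (3*k) \<noteq> \<mu> (3*k-3)) (\<mu> (3*k+1) \<noteq> \<mu> (3*k-3))"
  shows "vtyp \<mu> k = 0 \<longleftrightarrow> \<mu> (3*k-1) \<noteq> \<mu> (3*k-3)"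
    "vtyp \<mu> k = 2 \<longleftrightarrow> \<mu> (3*k+1) \<noteq> \<mu> (3*k-3)"
  using assms unfolding vtyp_def one3_def by auto

lemma flip1:
  assumes lv: "locally_valid n \<mu>" and j: "1 \<le> j" "j \<le> n"
  shows "flippable n \<mu> (1,j) \<longleftrightarrow> Xv n \<mu> (j-1) \<noteq> 2 \<and> Xv n \<mu> j \<noteq> 0"
proof -
  define dT where "dT k = (\<mu> (3*k-1) \<noteq> \<mu> (3*k-3))" for k
  define dR where "dR k = (\<mu> (3*k) \<noteq> \<mu> (3*k-3))" for k
  define dB where "dB k = (\<mu> (3*k+1) \<noteq> \<mu> (3*k-3))" for k
  have V: "\<forall>k\<in>{1..n-1}. one3 (dT k) (dR k) (dB k)" using lv lv_iff unfolding dT_def dR_def dB_def by blast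
  have fj: "(1,j) \<in> faces n" using j by (simp add: faces_def)
  have "flippable n \<mu> (1,j) \<longleftrightarrow> (\<forall>k\<in>{1..n-1}.
      one3 (dT k \<noteq> ((k+1 = j \<or> k = j) \<noteq> (k = j))) (dR k \<noteq> ((k+1 = j) \<noteq> (k = j))) (dB k \<noteq> (False \<noteq> (k = j))))"
    unfolding dT_def dR_def dB_def
    by (rule flip_gen[OF lv fj]) (use mem_border1 j in auto)
  also have "\<dots> \<longleftrightarrow> (j \<le> n-1 \<longrightarrow> \<not> dT j) \<and> (2 \<le> j \<longrightarrow> \<not> dB (j-1))"
  proof
    assume H: "\<forall>k\<in>{1..n-1}. one3 (dT k \<noteq> ((k+1 = j \<or> k = j) \<noteq> (k = j))) (dR k \<noteq> ((k+1 = j) \<noteq> (k = j))) (dB k \<noteq> (False \<noteq> (k = j)))"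
    show "(j \<le> n-1 \<longrightarrow> \<not> dT j) \<and> (2 \<le> j \<longrightarrow> \<not> dB (j-1))"
    proof (intro conjI impI)
      assume "j \<le> n-1"
      then have k: "j \<in> {1..n-1}" using j by simp
      have "one3 (dT j) (\<not> dR j) (\<not> dB j)" using H[rule_format, OF k] by simp
      then show "\<not> dT j" using one3_facts(1)[OF V[rule_format, OF k]] by simp
    next
      assume "2 \<le> j"
      then have k: "j-1 \<in> {1..n-1}" using j unfolding atLeastAtMost_iff by presburger
      have jj: "j - 1 \<noteq> j" "j - 1 + 1 = j" using \<open>2 \<le> j\<close> by auto
      have "one3 (\<not> dT (j-1)) (\<not> dR (j-1)) (dB (j-1))" using H[rule_format, OF k] jj by simp
      then show "\<not> dB (j-1)" using one3_facts(2)[OF V[rule_format, OF k]] by simp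
    qed
  next
    assume H: "(j \<le> n-1 \<longrightarrow> \<not> dT j) \<and> (2 \<le> j \<longrightarrow> \<not> dB (j-1))"
    show "\<forall>k\<in>{1..n-1}. one3 (dT k \<noteq> ((k+1 = j \<or> k = j) \<noteq> (k = j))) (dR k \<noteq> ((k+1 = j) \<noteq> (k = j))) (dB k \<noteq> (False \<noteq> (k = j)))"
    proof
      fix k assume k: "k \<in> {1..n-1}"
      note o = one3_facts[OF V[rule_format, OF k]]
      show "one3 (dT k \<noteq> ((k+1 = j \<or> k = j) \<noteq> (k = j))) (dR k \<noteq> ((k+1 = j) \<noteq> (k = j))) (dB k \<noteq> (False \<noteq> (k = j)))"
      proof (cases "k = j")
        case True
        then show ?thesis using H k o by auto
      next
        case False
        show ?thesis
        proof (cases "k + 1 = j")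
          case True
          then show ?thesis using H k o \<open>k \<noteq> j\<close> by auto
        next
          case False
          then show ?thesis using V k \<open>k \<noteq> j\<close> by auto
        qed
      qed
    qed
  qed
  also have "\<dots> \<longleftrightarrow> Xv n \<mu> (j-1) \<noteq> 2 \<and> Xv n \<mu> j \<noteq> 0"
  proof -
    have a: "(j \<le> n-1 \<longrightarrow> \<not> dT j) \<longleftrightarrow> Xv n \<mu> j \<noteq> 0"
    proof (cases "j \<le> n-1")
      case True
      then have k: "j \<in> {1..n-1}" using j by simp
      then show ?thesis using vtyp_facts(1)[OF V[rule_format, OF k, unfolded dT_def dR_def dB_def]] True j
        unfolding Xv_def dT_def by auto
    next
      case False
      then show ?thesis using j unfolding Xv_def by auto
    qed
    have b: "(2 \<le> j \<longrightarrow> \<not> dB (j-1)) \<longleftrightarrow> Xv n \<mu> (j-1) \<noteq> 2"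
    proof (cases "2 \<le> j")
      case True
      then have k: "j-1 \<in> {1..n-1}" using j unfolding atLeastAtMost_iff by presburger
      then show ?thesis using vtyp_facts(2)[OF V[rule_format, OF k, unfolded dT_def dR_def dB_def]] True j
        unfolding Xv_def dB_def by auto
    next
      case False
      then show ?thesis using j unfolding Xv_def by auto
    qed
    show ?thesis using a b by blast
  qed
  finally show ?thesis .
qed


lemma flip2:
  assumes lv: "locally_valid n \<mu>" and j: "1 \<le> j" "j \<le> n"
  shows "flippable n \<mu> (2,j) \<longleftrightarrow> Xv n \<mu> (j-1) \<noteq> 0 \<and> Xv n \<mu> j \<noteq> 2"
proof -
  define dT where "dT k = (\<mu> (3*k-1) \<noteq> \<mu> (3*k-3))" for k
  define dR where "dR k = (\<mu> (3*k) \<noteq> \<mu> (3*k-3))" for k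
  define dB where "dB k = (\<mu> (3*k+1) \<noteq> \<mu> (3*k-3))" for k
  have V: "\<forall>k\<in>{1..n-1}. one3 (dT k) (dR k) (dB k)" using lv lv_iff unfolding dT_def dR_def dB_def by blast
  have fj: "(2,j) \<in> faces n" using j by (simp add: faces_def)
  have "flippable n \<mu> (2,j) \<longleftrightarrow> (\<forall>k\<in>{1..n-1}.
      one3 (dT k \<noteq> (False \<noteq> (k = j))) (dR k \<noteq> ((k+1 = j) \<noteq> (k = j))) (dB k \<noteq> ((k+1 = j \<or> k = j) \<noteq> (k = j))))"
    unfolding dT_def dR_def dB_def
    by (rule flip_gen[OF lv fj]) (use mem_border2 j in auto)
  also have "\<dots> \<longleftrightarrow> (j \<le> n-1 \<longrightarrow> \<not> dB j) \<and> (2 \<le> j \<longrightarrow> \<not> dT (j-1))"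
  proof
    assume H: "\<forall>k\<in>{1..n-1}. one3 (dT k \<noteq> (False \<noteq> (k = j))) (dR k \<noteq> ((k+1 = j) \<noteq> (k = j))) (dB k \<noteq> ((k+1 = j \<or> k = j) \<noteq> (k = j)))"
    show "(j \<le> n-1 \<longrightarrow> \<not> dB j) \<and> (2 \<le> j \<longrightarrow> \<not> dT (j-1))"
    proof (intro conjI impI)
      assume "j \<le> n-1"
      then have k: "j \<in> {1..n-1}" using j by simp
      have "one3 (\<not> dT j) (\<not> dR j) (dB j)" using H[rule_format, OF k] by simp
      then show "\<not> dB j" using one3_facts(2)[OF V[rule_format, OF k]] by simp
    next
      assume "2 \<le> j"
      then have k: "j-1 \<in> {1..n-1}" using j unfolding atLeastAtMost_iff by presburger
      have jj: "j - 1 \<noteq> j" "j - 1 + 1 = j" using \<open>2 \<le> j\<close> by auto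
      have "one3 (dT (j-1)) (\<not> dR (j-1)) (\<not> dB (j-1))" using H[rule_format, OF k] jj by simp
      then show "\<not> dT (j-1)" using one3_facts(1)[OF V[rule_format, OF k]] by simp
    qed
  next
    assume H: "(j \<le> n-1 \<longrightarrow> \<not> dB j) \<and> (2 \<le> j \<longrightarrow> \<not> dT (j-1))"
    show "\<forall>k\<in>{1..n-1}. one3 (dT k \<noteq> (False \<noteq> (k = j))) (dR k \<noteq> ((k+1 = j) \<noteq> (k = j))) (dB k \<noteq> ((k+1 = j \<or> k = j) \<noteq> (k = j)))"
    proof
      fix k assume k: "k \<in> {1..n-1}"
      note o = one3_facts[OF V[rule_format, OF k]]
      show "one3 (dT k \<noteq> (False \<noteq> (k = j))) (dR k \<noteq> ((k+1 = j) \<noteq> (k = j))) (dB k \<noteq> ((k+1 = j \<or> k = j) \<noteq> (k = j)))"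
      proof (cases "k = j")
        case True
        then show ?thesis using H k o by auto
      next
        case False
        show ?thesis
        proof (cases "k + 1 = j")
          case True
          then show ?thesis using H k o \<open>k \<noteq> j\<close> by auto
        next
          case False
          then show ?thesis using V k \<open>k \<noteq> j\<close> by auto
        qed
      qed
    qed
  qed
  also have "\<dots> \<longleftrightarrow> Xv n \<mu> (j-1) \<noteq> 0 \<and> Xv n \<mu> j \<noteq> 2"
  proof -
    have a: "(j \<le> n-1 \<longrightarrow> \<not> dB j) \<longleftrightarrow> Xv n \<mu> j \<noteq> 2"
    proof (cases "j \<le> n-1")
      case True
      then have k: "j \<in> {1..n-1}" using j by simp
      then show ?thesis using vtyp_facts(2)[OF V[rule_format, OF k, unfolded dT_def dR_def dB_def]] True j
        unfolding Xv_def dB_def by auto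
    next
      case False
      then show ?thesis using j unfolding Xv_def by auto
    qed
    have b: "(2 \<le> j \<longrightarrow> \<not> dT (j-1)) \<longleftrightarrow> Xv n \<mu> (j-1) \<noteq> 0"
    proof (cases "2 \<le> j")
      case True
      then have k: "j-1 \<in> {1..n-1}" using j unfolding atLeastAtMost_iff by presburger
      then show ?thesis using vtyp_facts(1)[OF V[rule_format, OF k, unfolded dT_def dR_def dB_def]] True j
        unfolding Xv_def dT_def by auto
    next
      case False
      then show ?thesis using j unfolding Xv_def by auto
    qed
    show ?thesis using a b by blast
  qed
  finally show ?thesis .
qed

definition fw :: "nat \<Rightarrow> nat \<Rightarrow> nat" where
  "fw a b = (if a \<noteq> 2 \<and> b \<noteq> 0 then 1 else 0) + (if a \<noteq> 0 \<and> b \<noteq> 2 then 1 else 0)"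

fun pw :: "nat list \<Rightarrow> nat" where
  "pw (a # b # r) = fw a b + pw (b # r)"
| "pw _ = 0"

lemma pw_sum: "pw xs = (\<Sum>j<length xs - 1. fw (xs!j) (xs!Suc j))"
  by (induction xs rule: pw.induct) (simp_all add: sum.lessThan_Suc_shift del: sum.lessThan_Suc)

lemma card_filter_sum:
  assumes "finite A" shows "card {x\<in>A. P x} = (\<Sum>x\<in>A. if P x then 1 else 0)"
proof -
  have "card {x\<in>A. P x} = sum (\<lambda>x. 1) {x\<in>A. P x}" by (rule card_eq_sum)
  also have "\<dots> = (\<Sum>x\<in>A. if P x then 1 else 0)" by (rule sum.inter_filter[OF assms])
  finally show ?thesis .
qed

lemma cnt_sum:
  assumes lv: "locally_valid n \<mu>"
  shows "card {f \<in> faces n. flippable n \<mu> f} = (\<Sum>j<n. fw (Xv n \<mu> j) (Xv n \<mu> (Suc j)))"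
proof -
  have fin: "finite (faces n)" by (simp add: faces_def)
  have "card {f \<in> faces n. flippable n \<mu> f} = (\<Sum>f\<in>{1,2} \<times> {1..n}. if flippable n \<mu> f then 1 else 0)"
    using card_filter_sum[OF fin] by (simp add: faces_def)
  also have "\<dots> = (\<Sum>i\<in>{1::nat,2}. \<Sum>j\<in>{1..n}. if flippable n \<mu> (i,j) then 1 else 0)"
    by (simp add: sum.cartesian_product)
  also have "\<dots> = (\<Sum>j\<in>{1..n}. (if flippable n \<mu> (1,j) then 1 else 0) + (if flippable n \<mu> (2,j) then 1 else 0))"
    by (simp add: sum.distrib)
  also have "\<dots> = (\<Sum>j\<in>{1..n}. fw (Xv n \<mu> (j-1)) (Xv n \<mu> j))"
  proof (rule sum.cong)
    fix j assume j: "j \<in> {1..n}"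
    show "(if flippable n \<mu> (1,j) then 1 else 0) + (if flippable n \<mu> (2,j) then 1 else 0) = fw (Xv n \<mu> (j-1)) (Xv n \<mu> j)"
      using flip1[OF lv, of j] flip2[OF lv, of j] j unfolding fw_def by auto
  qed simp
  also have "\<dots> = (\<Sum>j<n. fw (Xv n \<mu> j) (Xv n \<mu> (Suc j)))"
    using sum.atLeast1_atMost_eq[of "\<lambda>j. fw (Xv n \<mu> (j-1)) (Xv n \<mu> j)" n] by simp
  finally show ?thesis .
qed

definition word :: "nat \<Rightarrow> (nat \<Rightarrow> int) \<Rightarrow> nat list" where
  "word n \<mu> = map (vtyp \<mu>) [1..<n]"

lemma word_nth:
  assumes "1 \<le> n" "j \<le> n"
  shows "(3 # word n \<mu> @ [3]) ! j = Xv n \<mu> j"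
proof (cases j)
  case 0 then show ?thesis by (simp add: Xv_def)
next
  case (Suc j')
  show ?thesis
  proof (cases "j' < n - 1")
    case True
    then show ?thesis using Suc assms by (auto simp: Xv_def word_def nth_append)
  next
    case False
    then have "j' = n - 1" using Suc assms by simp
    then show ?thesis using Suc assms by (simp add: Xv_def word_def nth_append)
  qed
qed

lemma cnt_pw:
  assumes lv: "locally_valid n \<mu>" and n: "1 \<le> n"
  shows "card {f \<in> faces n. flippable n \<mu> f} = pw (3 # word n \<mu> @ [3])"
proof -
  have "pw (3 # word n \<mu> @ [3]) = (\<Sum>j<n. fw ((3 # word n \<mu> @ [3])!j) ((3 # word n \<mu> @ [3])!Suc j))"
    using n by (simp add: pw_sum word_def)
  also have "\<dots> = (\<Sum>j<n. fw (Xv n \<mu> j) (Xv n \<mu> (Suc j)))"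
  proof (rule sum.cong)
    fix x assume "x \<in> {..<n}"
    then have x: "x \<le> n" "Suc x \<le> n" by auto
    have a: "(3 # word n \<mu> @ [3]) ! x = Xv n \<mu> x" by (rule word_nth[OF n x(1)])
    have b: "(3 # word n \<mu> @ [3]) ! Suc x = Xv n \<mu> (Suc x)" by (rule word_nth[OF n x(2)])
    show "fw ((3 # word n \<mu> @ [3])!x) ((3 # word n \<mu> @ [3])!Suc x) = fw (Xv n \<mu> x) (Xv n \<mu> (Suc x))"
      by (simp only: a b)
  qed simp
  finally show ?thesis using cnt_sum[OF lv] by simp
qed

fun Hh :: "int \<Rightarrow> nat list \<Rightarrow> nat \<Rightarrow> int" where
  "Hh s w 0 = s"
| "Hh s w (Suc k) = (if w!k = 1 then - Hh s w k else Hh s w k)"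

lemma Hh_pm: "s = 1 \<or> s = -1 \<Longrightarrow> Hh s w k = 1 \<or> Hh s w k = -1"
  by (induction k) auto

definition enc :: "nat \<Rightarrow> int \<Rightarrow> nat list \<Rightarrow> nat \<Rightarrow> int" where
  "enc n s w c = (if c \<in> creases n then
     (if c mod 3 = 0 then Hh s w (c div 3)
      else if c mod 3 = 2 then (if w!(c div 3) = 0 then - Hh s w (c div 3) else Hh s w (c div 3))
      else (if w!(c div 3 - 1) = 2 then - Hh s w (c div 3 - 1) else Hh s w (c div 3 - 1)))
   else undefined)"

lemma enc_at0:
  assumes "c \<in> creases n" "c = 3*i"
  shows "enc n s w c = Hh s w i"
proof -
  have "c mod 3 = 0" "c div 3 = i" using assms(2) by presburger+
  then show ?thesis using assms(1) by (simp add: enc_def)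
qed

lemma enc_at2:
  assumes "c \<in> creases n" "c = 3*i+2"
  shows "enc n s w c = (if w!i = 0 then - Hh s w i else Hh s w i)"
proof -
  have "c mod 3 = 2" "c div 3 = i" using assms(2) by presburger+
  then show ?thesis using assms(1) by (simp add: enc_def)
qed

lemma enc_at1:
  assumes "c \<in> creases n" "c = 3*i+4"
  shows "enc n s w c = (if w!i = 2 then - Hh s w i else Hh s w i)"
proof -
  have "c mod 3 = 1" "c div 3 - 1 = i" using assms(2) by presburger+
  then show ?thesis using assms(1) by (simp add: enc_def)
qed

lemma enc_vert:
  assumes k: "k \<in> {1..n-1}"
  shows "enc n s w (3*k-3) = Hh s w (k-1)"
    "enc n s w (3*k-1) = (if w!(k-1) = 0 then - Hh s w (k-1) else Hh s w (k-1))"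
    "enc n s w (3*k) = (if w!(k-1) = 1 then - Hh s w (k-1) else Hh s w (k-1))"
    "enc n s w (3*k+1) = (if w!(k-1) = 2 then - Hh s w (k-1) else Hh s w (k-1))"
proof -
  note c = vert_cre[OF k]
  obtain k' where k': "k = Suc k'" using k by (cases k) auto
  have e: "3*k-3 = 3*k'" "3*k-1 = 3*k'+2" "3*k = 3*(Suc k')" "3*k+1 = 3*k'+4" "k - 1 = k'"
    using k' by simp_all
  show "enc n s w (3*k-3) = Hh s w (k-1)" unfolding e(5) by (rule enc_at0[OF c(1) e(1)])
  show "enc n s w (3*k-1) = (if w!(k-1) = 0 then - Hh s w (k-1) else Hh s w (k-1))"
    unfolding e(5) by (rule enc_at2[OF c(2) e(2)])
  show "enc n s w (3*k) = (if w!(k-1) = 1 then - Hh s w (k-1) else Hh s w (k-1))"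
    unfolding e(5) enc_at0[OF c(3) e(3)] by simp
  show "enc n s w (3*k+1) = (if w!(k-1) = 2 then - Hh s w (k-1) else Hh s w (k-1))"
    unfolding e(5) by (rule enc_at1[OF c(4) e(4)])
qed

lemma enc_mv:
  assumes s: "s = 1 \<or> s = -1"
  shows "enc n s w \<in> mv_assignments n"
proof -
  have "enc n s w c \<in> {1,-1}" if "c \<in> creases n" for c
  proof -
    have h: "Hh s w i = 1 \<or> Hh s w i = -1" for i using Hh_pm[OF s] .
    show ?thesis using that h[of "c div 3"] h[of "c div 3 - 1"] unfolding enc_def by auto
  qed
  moreover have "enc n s w c = undefined" if "c \<notin> creases n" for c
    using that unfolding enc_def by simp
  ultimately show ?thesis unfolding mv_assignments_def PiE_iff extensional_def by blast
qed

lemma enc_lv: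
  assumes s: "s = 1 \<or> s = -1" and w: "length w = n-1" "set w \<subseteq> {0,1,2}"
  shows "locally_valid n (enc n s w)"
proof -
  have "one3 (enc n s w (3*k-1) \<noteq> enc n s w (3*k-3)) (enc n s w (3*k) \<noteq> enc n s w (3*k-3))
     (enc n s w (3*k+1) \<noteq> enc n s w (3*k-3))" if k: "k \<in> {1..n-1}" for k
  proof -
    have "k - 1 < length w" using k w by auto
    then have "w!(k-1) \<in> {0,1,2}" using w nth_mem by blast
    moreover have "Hh s w (k-1) \<noteq> - Hh s w (k-1)" using Hh_pm[OF s, of w "k-1"] by auto
    ultimately show ?thesis unfolding enc_vert[OF k] one3_def by auto
  qed
  then show ?thesis unfolding lv_iff using enc_mv[OF s] by blast
qed

lemma enc_word:
  assumes s: "s = 1 \<or> s = -1" and w: "length w = n-1" "set w \<subseteq> {0,1,2}"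
  shows "word n (enc n s w) = w" "enc n s w 0 = s"
proof -
  show "word n (enc n s w) = w"
  proof (rule nth_equalityI)
    show "length (word n (enc n s w)) = length w" using w by (simp add: word_def)
    fix i assume "i < length (word n (enc n s w))"
    then have i: "i < n - 1" by (simp add: word_def)
    then have k: "Suc i \<in> {1..n-1}" by simp
    have "i < length w" using i w by simp
    then have "w!i \<in> {0,1,2}" using w nth_mem by blast
    moreover have "Hh s w i \<noteq> - Hh s w i" using Hh_pm[OF s, of w i] by auto
    ultimately have "vtyp (enc n s w) (Suc i) = w!i"
      unfolding vtyp_def using enc_vert[OF k, of s w] by auto
    then show "word n (enc n s w) ! i = w ! i" using i by (simp add: word_def)
  qed
  show "enc n s w 0 = s" by (simp add: enc_def cre_iff)
qed

lemma lv_vals: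
  assumes lv: "locally_valid n \<mu>" and k: "k \<in> {1..n-1}"
  shows "\<mu> (3*k-1) = (if vtyp \<mu> k = 0 then - \<mu> (3*k-3) else \<mu> (3*k-3))"
    "\<mu> (3*k) = (if vtyp \<mu> k = 1 then - \<mu> (3*k-3) else \<mu> (3*k-3))"
    "\<mu> (3*k+1) = (if vtyp \<mu> k = 2 then - \<mu> (3*k-3) else \<mu> (3*k-3))"
proof -
  have mv: "\<mu> \<in> mv_assignments n" and o: "one3 (\<mu> (3*k-1) \<noteq> \<mu> (3*k-3)) (\<mu> (3*k) \<noteq> \<mu> (3*k-3)) (\<mu> (3*k+1) \<noteq> \<mu> (3*k-3))"
    using lv k lv_iff by blast+
  have v: "\<mu> (3*k-3) = 1 \<or> \<mu> (3*k-3) = -1" "\<mu> (3*k-1) = 1 \<or> \<mu> (3*k-1) = -1"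
      "\<mu> (3*k) = 1 \<or> \<mu> (3*k) = -1" "\<mu> (3*k+1) = 1 \<or> \<mu> (3*k+1) = -1"
    using mv_val[OF mv] vert_cre[OF k] by auto
  show "\<mu> (3*k-1) = (if vtyp \<mu> k = 0 then - \<mu> (3*k-3) else \<mu> (3*k-3))"
    using v o unfolding vtyp_def one3_def by auto
  show "\<mu> (3*k) = (if vtyp \<mu> k = 1 then - \<mu> (3*k-3) else \<mu> (3*k-3))"
    using v o unfolding vtyp_def one3_def by auto
  show "\<mu> (3*k+1) = (if vtyp \<mu> k = 2 then - \<mu> (3*k-3) else \<mu> (3*k-3))"
    using v o unfolding vtyp_def one3_def by auto
qed

lemma lv_inj:
  assumes lv: "locally_valid n \<mu>" "locally_valid n \<mu>'" and h0: "\<mu> 0 = \<mu>' 0"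
    and ww: "word n \<mu> = word n \<mu>'"
  shows "\<mu> = \<mu>'"
proof -
  have ty: "vtyp \<mu> k = vtyp \<mu>' k" if "k \<in> {1..n-1}" for k
  proof -
    have "k \<in> set [1..<n]" using that by auto
    then show ?thesis using ww unfolding word_def map_eq_conv by blast
  qed
  have H: "k \<le> n-1 \<longrightarrow> \<mu> (3*k) = \<mu>' (3*k)" for k
  proof (induction k)
    case 0 then show ?case using h0 by simp
  next
    case (Suc k)
    show ?case
    proof
      assume "Suc k \<le> n-1"
      then have k: "Suc k \<in> {1..n-1}" by simp
      have e: "3 * Suc k - 3 = 3 * k" by simp
      show "\<mu> (3 * Suc k) = \<mu>' (3 * Suc k)"
        using lv_vals(2)[OF lv(1) k] lv_vals(2)[OF lv(2) k] ty[OF k] Suc \<open>Suc k \<le> n-1\<close>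
        unfolding e by simp
    qed
  qed
  show ?thesis
  proof
    fix c
    show "\<mu> c = \<mu>' c"
    proof (cases "c \<in> creases n")
      case False
      have "\<mu> \<in> mv_assignments n" "\<mu>' \<in> mv_assignments n" using lv lv_iff by blast+
      then show ?thesis using False unfolding mv_assignments_def PiE_iff extensional_def by auto
    next
      case True
      show ?thesis
      proof (cases "c = 0")
        case True then show ?thesis using h0 by simp
      next
        case False
        then obtain k where k: "k \<in> {1..n-1}" and c: "c \<in> {3*k-1, 3*k, 3*k+1}"
          using \<open>c \<in> creases n\<close> unfolding creases_def by blast
        have e: "3*k-3 = 3*(k-1)" by simp
        have L: "\<mu> (3*k-3) = \<mu>' (3*k-3)" using H[of "k-1"] k unfolding e by auto
        show ?thesis using c lv_vals[OF lv(1) k] lv_vals[OF lv(2) k] ty[OF k] L by auto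
      qed
    qed
  qed
qed

definition Sw :: "nat \<Rightarrow> nat \<Rightarrow> nat \<Rightarrow> nat list set" where
  "Sw m a d = {w. length w = m \<and> set w \<subseteq> {0,1,2} \<and> pw (a # w @ [3]) = d}"

lemma Sw_finite: "finite (Sw m a d)"
proof -
  have "Sw m a d \<subseteq> {w. set w \<subseteq> {0,1,2} \<and> length w = m}" unfolding Sw_def by auto
  moreover have "finite {w. set w \<subseteq> {0::nat,1,2} \<and> length w = m}"
    by (rule finite_lists_length_eq) simp
  ultimately show ?thesis by (rule finite_subset)
qed

lemma v_eq:
  assumes n: "1 \<le> n"
  shows "v n d = 2 * card (Sw (n-1) 3 d)"
proof -
  define LVd where "LVd = {\<mu>. locally_valid n \<mu> \<and> card {f \<in> faces n. flippable n \<mu> f} = d}"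
  define dec where "dec \<mu> = (\<mu> 0, word n \<mu>)" for \<mu> :: "nat \<Rightarrow> int"
  have inj: "inj_on dec LVd"
    unfolding inj_on_def LVd_def dec_def using lv_inj by blast
  have img: "dec ` LVd = {1,-1} \<times> Sw (n-1) 3 d"
  proof
    show "dec ` LVd \<subseteq> {1,-1} \<times> Sw (n-1) 3 d"
    proof
      fix x assume "x \<in> dec ` LVd"
      then obtain \<mu> where mu: "locally_valid n \<mu>" "card {f \<in> faces n. flippable n \<mu> f} = d" and x: "x = dec \<mu>"
        unfolding LVd_def by blast
      have mv: "\<mu> \<in> mv_assignments n" using mu lv_iff by blast
      have "\<mu> 0 \<in> {1,-1}" using mv_val[OF mv, of 0] by (auto simp: cre_iff)
      moreover have "set (word n \<mu>) \<subseteq> {0,1,2}" unfolding word_def vtyp_def by auto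
      moreover have "length (word n \<mu>) = n - 1" by (simp add: word_def)
      moreover have "pw (3 # word n \<mu> @ [3]) = d" using cnt_pw[OF mu(1) n] mu(2) by simp
      ultimately show "x \<in> {1,-1} \<times> Sw (n-1) 3 d" unfolding x dec_def Sw_def by simp
    qed
  next
    show "{1,-1} \<times> Sw (n-1) 3 d \<subseteq> dec ` LVd"
    proof
      fix x :: "int \<times> nat list" assume "x \<in> {1,-1} \<times> Sw (n-1) 3 d"
      then obtain s w where x: "x = (s,w)" and s: "(s::int) = 1 \<or> s = -1" and w: "length w = n-1" "set w \<subseteq> {0,1,2}"
        and pw: "pw (3 # w @ [3]) = d"
        unfolding Sw_def by blast
      have lv: "locally_valid n (enc n s w)" by (rule enc_lv[OF s w])
      have we: "word n (enc n s w) = w" "enc n s w 0 = s" using enc_word[OF s w] by auto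
      have "card {f \<in> faces n. flippable n (enc n s w) f} = d" using cnt_pw[OF lv n] we pw by simp
      then have "enc n s w \<in> LVd" using lv unfolding LVd_def by blast
      moreover have "dec (enc n s w) = x" using we x unfolding dec_def by simp
      ultimately show "x \<in> dec ` LVd" by blast
    qed
  qed
  have "v n d = card LVd" unfolding v_def LVd_def by simp
  also have "\<dots> = card (dec ` LVd)" using card_image[OF inj] by simp
  also have "\<dots> = 2 * card (Sw (n-1) 3 d)" unfolding img by (simp add: card_cartesian_product)
  finally show ?thesis .
qed

definition Tset :: "nat \<Rightarrow> nat \<Rightarrow> nat \<Rightarrow> nat \<Rightarrow> nat list set" where
  "Tset m a d b = (if fw a b \<le> d then Sw m b (d - fw a b) else {})"

lemma Sw_0: "Sw 0 a d = (if fw a 3 = d then {[]} else {})"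
  by (auto simp: Sw_def)

lemma Sw_Suc: "Sw (Suc m) a d = Cons 0 ` Tset m a d 0 \<union> Cons 1 ` Tset m a d 1 \<union> Cons 2 ` Tset m a d 2"
proof
  show "Sw (Suc m) a d \<subseteq> Cons 0 ` Tset m a d 0 \<union> Cons 1 ` Tset m a d 1 \<union> Cons 2 ` Tset m a d 2"
  proof
    fix w assume w: "w \<in> Sw (Suc m) a d"
    then obtain b w' where bw: "w = b # w'" unfolding Sw_def by (cases w) auto
    have b: "b \<in> {0,1,2}" and w': "length w' = m" "set w' \<subseteq> {0,1,2}" "fw a b + pw (b # w' @ [3]) = d"
      using w unfolding bw Sw_def by auto
    have "w' \<in> Tset m a d b" using w' unfolding Tset_def Sw_def by auto
    then show "w \<in> Cons 0 ` Tset m a d 0 \<union> Cons 1 ` Tset m a d 1 \<union> Cons 2 ` Tset m a d 2"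
      using b bw by auto
  qed
next
  have "b # w' \<in> Sw (Suc m) a d" if "b \<in> {0,1,2}" "w' \<in> Tset m a d b" for b w'
    using that unfolding Tset_def Sw_def by (auto split: if_splits)
  then show "Cons 0 ` Tset m a d 0 \<union> Cons 1 ` Tset m a d 1 \<union> Cons 2 ` Tset m a d 2 \<subseteq> Sw (Suc m) a d"
    by auto
qed

lemma Tset_finite: "finite (Tset m a d b)"
  unfolding Tset_def using Sw_finite by auto

lemma card3img:
  assumes "finite A" "finite B" "finite C" "x \<noteq> y" "x \<noteq> z" "y \<noteq> z"
  shows "card (Cons x ` A \<union> Cons y ` B \<union> Cons z ` C) = card A + card B + card C"
proof -
  have i: "card (Cons u ` S) = card S" for u :: 'a and S
    by (rule card_image) (simp add: inj_on_def)
  have d1: "Cons x ` A \<inter> Cons y ` B = {}" using assms by auto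
  have d2: "(Cons x ` A \<union> Cons y ` B) \<inter> Cons z ` C = {}" using assms by auto
  have "card (Cons x ` A \<union> Cons y ` B \<union> Cons z ` C) = card (Cons x ` A \<union> Cons y ` B) + card (Cons z ` C)"
    using d2 assms by (intro card_Un_disjoint) auto
  also have "card (Cons x ` A \<union> Cons y ` B) = card (Cons x ` A) + card (Cons y ` B)"
    using d1 assms by (intro card_Un_disjoint) auto
  finally show ?thesis by (simp add: i)
qed

lemma card_Sw_Suc: "card (Sw (Suc m) a d) = card (Tset m a d 0) + card (Tset m a d 1) + card (Tset m a d 2)"
  unfolding Sw_Suc by (rule card3img) (simp_all add: Tset_finite)

lemma Sw_card: "a \<in> {0,1,2,3} \<Longrightarrow> card (Sw m a d) = (if a = 0 \<or> a = 2 then Aw m d else Rw m d)"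
proof (induction m arbitrary: a d)
  case 0
  then show ?case unfolding Sw_0 fw_def by auto
next
  case (Suc m)
  have ct: "card (Tset m a d b) = (if fw a b \<le> d then (if b = 0 \<or> b = 2 then Aw m (d - fw a b) else Rw m (d - fw a b)) else 0)"
    if "b \<in> {0,1,2}" for b
    using Suc.IH[of b "d - fw a b"] that unfolding Tset_def by auto
  have "card (Sw (Suc m) a d) = (if fw a 0 \<le> d then Aw m (d - fw a 0) else 0)
     + (if fw a 1 \<le> d then Rw m (d - fw a 1) else 0) + (if fw a 2 \<le> d then Aw m (d - fw a 2) else 0)"
    unfolding card_Sw_Suc using ct[of 0] ct[of 1] ct[of 2] by simp
  then show ?case using Suc.prems by (cases d) (auto simp: fw_def)
qed

lemma v_Rw: "1 \<le> n \<Longrightarrow> v n d = 2 * Rw (n-1) d"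
  using v_eq Sw_card[of 3] by simp


lemma ceil_ge: "int (d div 2) \<le> \<lceil>real d / 2\<rceil>"
proof -
  have "real (d div 2) * 2 \<le> real d" by (metis of_nat_le_iff of_nat_mult of_nat_numeral div_times_less_eq_dividend)
  then have "real (d div 2) \<le> real d / 2" by simp
  then have "of_int (int (d div 2)) - 1 < real d / 2" by simp
  then show ?thesis by (simp add: le_ceiling_iff)
qed

theorem theorem4p11:
  fixes d :: nat
  assumes "d \<ge> 2"
  shows "\<exists>p :: real poly. p \<noteq> 0 \<and> degree p = d - 2 \<and>
           (\<forall>n::nat. int n \<ge> \<lceil>real d / 2\<rceil> + 1 \<longrightarrow> real (v n d) = poly p (real n))"
proof -
  have "polyR d" using poly_main[of d] assms by simp
  then obtain pR where pR: "degree pR = d-2" "lead_coeff pR > 0"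
      "\<forall>m \<ge> d div 2. real (Rw m d) = poly pR (real m)"
    unfolding polyR_def by blast
  define p where "p = smult 2 (pcompose pR [:-1,1:])"
  have lc: "lead_coeff (pcompose pR [:-1,1::real:]) = lead_coeff pR * lead_coeff [:-1,1::real:] ^ degree pR"
    by (rule lead_coeff_comp) simp
  have dp: "degree p = d - 2" using pR(1) by (simp add: p_def degree_pcompose)
  have "lead_coeff p > 0" using lc pR(2) dp pR(1) by (simp add: p_def degree_pcompose)
  then have p0: "p \<noteq> 0" by auto
  have "real (v n d) = poly p (real n)" if n: "int n \<ge> \<lceil>real d / 2\<rceil> + 1" for n
  proof -
    have "int n \<ge> int (d div 2) + 1" using n ceil_ge[of d] by linarith
    then have n1: "1 \<le> n" "n - 1 \<ge> d div 2" by linarith+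
    have "real (v n d) = 2 * real (Rw (n-1) d)" using v_Rw[OF n1(1)] by simp
    also have "\<dots> = 2 * poly pR (real (n-1))" using pR(3) n1(2) by simp
    also have "\<dots> = poly p (real n)" using n1(1) by (simp add: p_def poly_pcompose of_nat_diff)
    finally show ?thesis .
  qed
  then show ?thesis using p0 dp by blast
qed

end
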